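(* For all $\mathbf w_1,\mathbf w_2\in\mathcal V_{\mathrm{BSSC}}$ with $\mathbf w_1\neq\mathbf w_2$ we have $|\mathbf w_1^\dagger\mathbf w_2|\le1/\sqrt2$, and (for $m\ge1$) equality is attained by some pair. Consequently the minimum chordal distance $\min_{\mathbf w_1\ne\mathbf w_2}\sqrt{1-|\mathbf w_1^\dagger\mathbf w_2|^2}$ of $\mathcal V_{\mathrm{BSSC}}$ equals $1/\sqrt2$, the same as that of $\mathcal V_{\mathrm{BC}}$.
   Context: Fix $m\ge1$, $N=2^m$. Binary vectors are columns over $\mathbb F_2$; $\mathrm{Sym}(r;2)$ is the set of symmetric binary $r\times r$ matrices, $\mathcal G(m,r;2)$ the set of $r$-dimensional subspaces of $\mathbb F_2^m$. Vectors of $\mathbb C^N$ are indexed by $\mathbb F_2^m$; $\dagger$ is conjugate transpose. Whenever a binary expression appears in an exponent of $i$, binary entries are lifted to the integers $0,1$ and the expression is evaluated in $\mathbb Z$ (equivalently mod 4). Echelon data: for $0\le r\le m$ and $H\in\mathcal G(m,r;2)$, let $\mathbf H_{\mathcal I}$ be the unique $m\times r$ binary matrix in column reduced echelon form with column space $H$: there are indices $i_1<\dots<i_r$, $\mathcal I=\{i_1,\dots,i_r\}$, such that rows $i_1,\dots,i_r$ of $\mathbf H_{\mathcal I}$ form $\mathbf I_r$ and column $j$ of $\mathbf H_{\mathcal I}$ is zero in all rows above row $i_j$. Let $\mathbf I_{\tilde{\mathcal I}}$ be the $m\times(m-r)$ matrix whose columns are the standard basis vectors $\mathbf e_i$ with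 $i\notin\mathcal I$, in increasing order of $i$, and put $\mathbf P_{\mathcal I}=[\mathbf H_{\mathcal I}\ \ \mathbf I_{\tilde{\mathcal I}}]\in\mathrm{GL}(m;2)$. (For $r=0$: $H=\{0\}$, $\mathbf P_{\mathcal I}=\mathbf I_m$.) For $\mathbf S_r\in\mathrm{Sym}(r;2)$, $\tilde{\mathbf S}_r\in\mathrm{Sym}(m;2)$ denotes the matrix with $\mathbf S_r$ as its upper-left $r\times r$ block and zeros elsewhere. Binary subspace chirps: let $f(\mathbf v,\mathbf w,r)=\prod_{i=r+1}^m(1+v_i+w_i)$ computed in $\mathbb F_2$ and viewed in $\{0,1\}$. For $\mathbf b\in\mathbb F_2^m$, the binary subspace chirp (BSSC) $\mathbf w_{\mathbf b}=\mathbf w^{H,\mathbf S_r}_{\mathbf b}\in\mathbb C^N$ has entries $\mathbf w_{\mathbf b}(\mathbf a)=2^{-r/2}\,i^{\mathbf u^T\tilde{\mathbf S}_r\mathbf u+2\mathbf b^T\mathbf u}\,f(\mathbf b,\mathbf u,r)$ with $\mathbf u=\mathbf P_{\mathcal I}^{-1}\mathbf a\in\mathbb F_2^m$, for $\mathbf a\in\mathbb F_2^m$. The integer $r$ is its rank. $\mathcal V_{\mathrm{BSSC}}$ is the set of all such vectors over all $0\le r\le m$, $H\in\mathcal G(m,r;2)$, $\mathbf S_r\in\mathrm{Sym}(r;2)$, $\mathbf b\in\mathbb F_2^m$; binary chirps are the BSSCs of rank $r=m$, and $\mathcal V_{\mathrm{BC}}$ is their set. *)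

theory Defs
  imports Complex_Main
begin

text \<open>Binary vectors of F_2^m: functions nat => bool supported on {0..<m}
  (coordinates are 0-indexed: paper index i corresponds to i-1 here).\<close>
definition bvecs :: "nat \<Rightarrow> (nat \<Rightarrow> bool) set" where
  "bvecs m = {v. \<forall>i. m \<le> i \<longrightarrow> \<not> v i}"

text \<open>H is an m x r binary matrix in column reduced echelon form with pivot
  rows piv 0 < ... < piv (r-1) (the index set I).\<close>
definition is_cref :: "nat \<Rightarrow> nat \<Rightarrow> (nat \<Rightarrow> nat \<Rightarrow> bool) \<Rightarrow> (nat \<Rightarrow> nat) \<Rightarrow> bool" where
  "is_cref m r H piv \<longleftrightarrow>
     (\<forall>j<r. piv j < m) \<and>
     (\<forall>j k. j < k \<longrightarrow> k < r \<longrightarrow> piv j < piv k) \<and>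
     (\<forall>j<r. \<forall>k<r. H (piv k) j = (k = j)) \<and>
     (\<forall>j<r. \<forall>i<piv j. \<not> H i j) \<and>
     (\<forall>i j. (m \<le> i \<or> r \<le> j) \<longrightarrow> \<not> H i j)"

text \<open>Non-pivot indices in increasing order (columns of I_{~I}).\<close>
definition nonpiv :: "nat \<Rightarrow> nat \<Rightarrow> (nat \<Rightarrow> nat) \<Rightarrow> nat list" where
  "nonpiv m r piv = filter (\<lambda>i. i \<notin> piv ` {..<r}) [0..<m]"

text \<open>The product P_I u over F_2, with P_I = [H_I  I_{~I}].\<close>
definition Pmul :: "nat \<Rightarrow> nat \<Rightarrow> (nat \<Rightarrow> nat \<Rightarrow> bool) \<Rightarrow> (nat \<Rightarrow> nat) \<Rightarrow> (nat \<Rightarrow> bool) \<Rightarrow> (nat \<Rightarrow> bool)" where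
  "Pmul m r H piv u = (\<lambda>i. i < m \<and>
     odd ((\<Sum>j<r. of_bool (H i j \<and> u j)) +
          (\<Sum>k<m - r. of_bool (nonpiv m r piv ! k = i \<and> u (r + k))) :: nat))"

definition is_symr :: "nat \<Rightarrow> (nat \<Rightarrow> nat \<Rightarrow> bool) \<Rightarrow> bool" where
  "is_symr r S \<longleftrightarrow> (\<forall>i<r. \<forall>j<r. S i j = S j i)"

text \<open>The binary subspace chirp w_b^{H,S_r}, a vector of C^N indexed by F_2^m
  (set to 0 outside bvecs m). The exponent u^T S~_r u + 2 b^T u is evaluated
  in the integers with entries lifted to 0/1; f(b,u,r) = prod_{i>r} (1+b_i+u_i) in F_2.\<close>
definition bssc :: "nat \<Rightarrow> nat \<Rightarrow> (nat \<Rightarrow> nat \<Rightarrow> bool) \<Rightarrow> (nat \<Rightarrow> nat) \<Rightarrow> (nat \<Rightarrow> nat \<Rightarrow> bool)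
                     \<Rightarrow> (nat \<Rightarrow> bool) \<Rightarrow> (nat \<Rightarrow> bool) \<Rightarrow> complex" where
  "bssc m r H piv S b = (\<lambda>a. if a \<in> bvecs m then
     (let u = (THE u. u \<in> bvecs m \<and> Pmul m r H piv u = a) in
        complex_of_real (1 / sqrt (2 ^ r)) *
        \<i> ^ ((\<Sum>i<r. \<Sum>j<r. of_bool (S i j \<and> u i \<and> u j)) + 2 * (\<Sum>i<m. of_bool (b i \<and> u i)))
        * (\<Prod>i\<in>{r..<m}. of_bool (b i = u i)))
     else 0)"

definition V_BSSC :: "nat \<Rightarrow> ((nat \<Rightarrow> bool) \<Rightarrow> complex) set" where
  "V_BSSC m = {bssc m r H piv S b | r H piv S b.
      r \<le> m \<and> is_cref m r H piv \<and> is_symr r S \<and> b \<in> bvecs m}"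

definition V_BC :: "nat \<Rightarrow> ((nat \<Rightarrow> bool) \<Rightarrow> complex) set" where
  "V_BC m = {bssc m m H piv S b | H piv S b.
      is_cref m m H piv \<and> is_symr m S \<and> b \<in> bvecs m}"

definition cinner :: "nat \<Rightarrow> ((nat \<Rightarrow> bool) \<Rightarrow> complex) \<Rightarrow> ((nat \<Rightarrow> bool) \<Rightarrow> complex) \<Rightarrow> complex" where
  "cinner m w1 w2 = (\<Sum>a\<in>bvecs m. cnj (w1 a) * w2 a)"

definition min_chordal :: "nat \<Rightarrow> ((nat \<Rightarrow> bool) \<Rightarrow> complex) set \<Rightarrow> real" where
  "min_chordal m V = Min {sqrt (1 - (cmod (cinner m w1 w2))^2) | w1 w2.
      w1 \<in> V \<and> w2 \<in> V \<and> w1 \<noteq> w2}"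

end

theory Submission
  imports Defs
begin

definition xv :: "(nat\<Rightarrow>bool) \<Rightarrow> (nat\<Rightarrow>bool) \<Rightarrow> (nat\<Rightarrow>bool)" where
  "xv u v = (\<lambda>i. u i \<noteq> v i)"
definition zv :: "nat \<Rightarrow> bool" where "zv = (\<lambda>_. False)"

lemma xv_comm: "xv u v = xv v u" unfolding xv_def by auto
lemma xv_assoc: "xv (xv u v) w = xv u (xv v w)" unfolding xv_def by auto
lemma xv_self[simp]: "xv u u = zv" unfolding xv_def zv_def by auto
lemma xv_zv[simp]: "xv u zv = u" "xv zv u = u" unfolding xv_def zv_def by auto
lemma xv_cancel[simp]: "xv (xv u v) v = u" "xv v (xv v u) = u" unfolding xv_def by auto
lemma xv_app[simp]: "xv u v i = (u i \<noteq> v i)" unfolding xv_def by simp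
lemma zv_app[simp]: "zv i = False" unfolding zv_def by simp

lemma bvecs_iff: "v \<in> bvecs m \<longleftrightarrow> (\<forall>i. v i \<longrightarrow> i < m)"
  unfolding bvecs_def by (auto simp: not_le)

lemma zv_bvecs[simp]: "zv \<in> bvecs m" by (simp add: bvecs_iff)
lemma xv_bvecs[intro]: "u \<in> bvecs m \<Longrightarrow> v \<in> bvecs m \<Longrightarrow> xv u v \<in> bvecs m"
  by (auto simp: bvecs_iff)
lemma bvecs_mono: "r \<le> m \<Longrightarrow> u \<in> bvecs r \<Longrightarrow> u \<in> bvecs m"
  by (auto simp: bvecs_iff)

lemma bvecs_image: "bvecs m = (\<lambda>S i. i \<in> S) ` Pow {..<m}"
proof
  show "bvecs m \<subseteq> (\<lambda>S i. i \<in> S) ` Pow {..<m}"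
  proof
    fix v assume "v \<in> bvecs m"
    then have "{i. v i} \<in> Pow {..<m}" "v = (\<lambda>i. i \<in> {i. v i})" by (auto simp: bvecs_iff)
    then show "v \<in> (\<lambda>S i. i \<in> S) ` Pow {..<m}" by blast
  qed
qed (auto simp: bvecs_iff)

lemma finite_bvecs[simp]: "finite (bvecs m)"
  by (simp add: bvecs_image)

lemma card_bvecs: "card (bvecs m) = 2 ^ m"
proof -
  have "inj_on (\<lambda>S i. i \<in> S) (Pow {..<m})"
    by (rule inj_onI) (metis (mono_tags) Collect_mem_eq)
  then show ?thesis by (simp add: bvecs_image card_image card_Pow)
qed

lemma bij_xv: "w \<in> bvecs m \<Longrightarrow> bij_betw (\<lambda>u. xv u w) (bvecs m) (bvecs m)"
  by (rule bij_betw_byWitness[where f'="\<lambda>u. xv u w"]) auto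



lemma parity_pt: "(of_bool (P \<and> (a \<noteq> b)) :: nat) + 2 * of_bool (P \<and> a \<and> b) = of_bool (P \<and> a) + of_bool (P \<and> b)"
  by auto

lemma sum_parity:
  fixes P :: "'a \<Rightarrow> bool"
  shows "(\<Sum>j\<in>A. (of_bool (P j \<and> (u j \<noteq> v j)) :: nat)) + 2 * (\<Sum>j\<in>A. of_bool (P j \<and> u j \<and> v j))
     = (\<Sum>j\<in>A. of_bool (P j \<and> u j)) + (\<Sum>j\<in>A. of_bool (P j \<and> v j))"
  by (simp add: sum_distrib_left sum.distrib[symmetric]) (rule sum.cong, auto)

lemma parity_comb: "(a::nat) + 2 * c = x + y \<Longrightarrow> a' + 2 * c' = x' + y' \<Longrightarrow> odd (a + a') \<longleftrightarrow> (odd (x + x') \<noteq> odd (y + y'))"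
  by presburger

lemma Pmul_xv: "Pmul m r H piv (xv u v) = xv (Pmul m r H piv u) (Pmul m r H piv v)"
proof
  fix i
  let ?X1 = "\<lambda>u. (\<Sum>j<r. of_bool (H i j \<and> u j)) :: nat"
  let ?X2 = "\<lambda>u. (\<Sum>k<m - r. of_bool (nonpiv m r piv ! k = i \<and> u (r + k))) :: nat"
  have e1: "?X1 (xv u v) + 2 * (\<Sum>j<r. of_bool (H i j \<and> u j \<and> v j)) = ?X1 u + ?X1 v"
    using sum_parity[of "\<lambda>j. H i j" u v "{..<r}"] by simp
  have e2: "?X2 (xv u v) + 2 * (\<Sum>k<m-r. of_bool (nonpiv m r piv ! k = i \<and> u (r+k) \<and> v (r+k))) = ?X2 u + ?X2 v"
    using sum_parity[of "\<lambda>k. nonpiv m r piv ! k = i" "\<lambda>k. u (r+k)" "\<lambda>k. v (r+k)" "{..<m-r}"] by simp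
  have "odd (?X1 (xv u v) + ?X2 (xv u v)) \<longleftrightarrow> (odd (?X1 u + ?X2 u) \<noteq> odd (?X1 v + ?X2 v))"
    using parity_comb[OF e1 e2] .
  then show "Pmul m r H piv (xv u v) i = xv (Pmul m r H piv u) (Pmul m r H piv v) i"
    unfolding Pmul_def by auto
qed

locale cref =
  fixes m r :: nat and H :: "nat \<Rightarrow> nat \<Rightarrow> bool" and piv :: "nat \<Rightarrow> nat"
  assumes cr: "is_cref m r H piv" and rm: "r \<le> m"
begin

lemma piv_lt: "j < r \<Longrightarrow> piv j < m" using cr unfolding is_cref_def by auto
lemma piv_mono: "j < k \<Longrightarrow> k < r \<Longrightarrow> piv j < piv k" using cr unfolding is_cref_def by auto
lemma H_piv: "j < r \<Longrightarrow> k < r \<Longrightarrow> H (piv k) j = (k = j)" using cr unfolding is_cref_def by auto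
lemma H_above: "j < r \<Longrightarrow> i < piv j \<Longrightarrow> \<not> H i j" using cr unfolding is_cref_def by auto
lemma H_out: "m \<le> i \<or> r \<le> j \<Longrightarrow> \<not> H i j" using cr unfolding is_cref_def by auto

lemma piv_inj: "inj_on piv {..<r}"
proof (rule inj_onI)
  fix x y assume "x \<in> {..<r}" "y \<in> {..<r}" "piv x = piv y"
  then show "x = y" using piv_mono[of x y] piv_mono[of y x] by (metis lessThan_iff linorder_neqE_nat less_irrefl)
qed

abbreviation "np \<equiv> nonpiv m r piv"

lemma np_distinct: "distinct np" unfolding nonpiv_def by simp
lemma np_set: "set np = {..<m} - piv ` {..<r}" unfolding nonpiv_def by auto
lemma np_len: "length np = m - r"
proof -
  have "length np = card (set np)" using np_distinct by (simp add: distinct_card)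
  also have "\<dots> = card {..<m} - card (piv ` {..<r})"
    using np_set piv_lt by (simp add: card_Diff_subset image_subset_iff)
  also have "\<dots> = m - r" using piv_inj by (simp add: card_image)
  finally show ?thesis .
qed

lemma np_nth: "k < m - r \<Longrightarrow> np ! k < m \<and> np ! k \<notin> piv ` {..<r}"
  using np_len np_set nth_mem[of k np] by auto

lemma Pmul_piv: "k < r \<Longrightarrow> Pmul m r H piv u (piv k) = u k"
proof -
  assume k: "k < r"
  have h1: "(\<Sum>j<r. (of_bool (H (piv k) j \<and> u j) :: nat)) = (\<Sum>j<r. of_bool (j = k \<and> u j))"
    by (rule sum.cong) (use k H_piv in auto)
  have h1': "(\<Sum>j<r. (of_bool (j = k \<and> u j) :: nat)) = of_bool (u k)"
    using k by (subst sum.cong[OF refl, of _ _ "\<lambda>j. if j = k then of_bool (u k) else 0"]) auto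
  have h2: "(\<Sum>k'<m - r. (of_bool (np ! k' = piv k \<and> u (r + k')) :: nat)) = 0"
    using np_nth k by auto
  show ?thesis unfolding Pmul_def using h1 h1' h2 k piv_lt by simp
qed

lemma Pmul_bvecs: "Pmul m r H piv u \<in> bvecs m"
  unfolding Pmul_def bvecs_iff by auto

lemma Pmul_np: "k < m - r \<Longrightarrow> (\<forall>j<r. \<not> u j) \<Longrightarrow> Pmul m r H piv u (np ! k) = u (r + k)"
proof -
  assume k: "k < m - r" and z: "\<forall>j<r. \<not> u j"
  have h1: "(\<Sum>j<r. (of_bool (H (np ! k) j \<and> u j) :: nat)) = 0" using z by simp
  have h2: "(\<Sum>k'<m - r. (of_bool (np ! k' = np ! k \<and> u (r + k')) :: nat)) = (\<Sum>k'<m - r. if k' = k then of_bool (u (r + k)) else 0)"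
    by (rule sum.cong) (use k np_len np_distinct in \<open>auto simp: nth_eq_iff_index_eq\<close>)
  show ?thesis unfolding Pmul_def using h1 h2 k np_nth by simp
qed

lemma Pmul_zero: "u \<in> bvecs m \<Longrightarrow> Pmul m r H piv u = zv \<Longrightarrow> u = zv"
proof -
  assume u: "u \<in> bvecs m" and P: "Pmul m r H piv u = zv"
  have a: "\<forall>j<r. \<not> u j" using Pmul_piv P by (metis zv_app)
  show "u = zv"
  proof
    fix i show "u i = zv i"
    proof (cases "i < r")
      case True then show ?thesis using a by simp
    next
      case False
      show ?thesis
      proof (cases "i < m")
        case True
        then have "i - r < m - r" using False by simp
        then have "Pmul m r H piv u (np ! (i - r)) = u i" using Pmul_np[OF _ a] False by simp
        then show ?thesis using P by simp
      next
        case False then show ?thesis using u by (auto simp: bvecs_iff)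
      qed
    qed
  qed
qed

lemma Pmul_inj: "inj_on (Pmul m r H piv) (bvecs m)"
proof (rule inj_onI)
  fix u v assume "u \<in> bvecs m" "v \<in> bvecs m" "Pmul m r H piv u = Pmul m r H piv v"
  then have "Pmul m r H piv (xv u v) = zv" by (simp add: Pmul_xv)
  then have "xv u v = zv" using Pmul_zero \<open>u \<in> bvecs m\<close> \<open>v \<in> bvecs m\<close> by blast
  then show "u = v" by (metis xv_cancel(1) xv_zv(2) xv_comm)
qed

lemma Pmul_bij: "bij_betw (Pmul m r H piv) (bvecs m) (bvecs m)"
proof -
  have "Pmul m r H piv ` bvecs m \<subseteq> bvecs m" using Pmul_bvecs by auto
  moreover have "card (Pmul m r H piv ` bvecs m) = card (bvecs m)" using Pmul_inj by (simp add: card_image)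
  ultimately have "Pmul m r H piv ` bvecs m = bvecs m" by (simp add: card_subset_eq)
  then show ?thesis using Pmul_inj by (simp add: bij_betw_def)
qed

lemma the_Pmul: "u \<in> bvecs m \<Longrightarrow> (THE v. v \<in> bvecs m \<and> Pmul m r H piv v = Pmul m r H piv u) = u"
  using Pmul_inj by (auto intro!: the_equality dest: inj_onD)

end


lemma unit_cnj: "cmod z = 1 \<Longrightarrow> cnj z * z = 1"
  by (metis complex_norm_square mult.commute of_real_1 power_one)

lemma unit_re1: "cmod z = 1 \<Longrightarrow> Re z = 1 \<Longrightarrow> z = 1"
  using cmod_power2[of z] by (simp add: complex_eq_iff)

lemma char_sum:
  fixes \<chi> :: "(nat\<Rightarrow>bool) \<Rightarrow> (nat\<Rightarrow>bool) \<Rightarrow> real"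
  assumes pm: "\<forall>h\<in>bvecs r. \<forall>w\<in>bvecs r. \<chi> h w = 1 \<or> \<chi> h w = -1"
   and lin: "\<forall>h\<in>bvecs r. \<forall>h'\<in>bvecs r. \<forall>w\<in>bvecs r. \<chi> (xv h h') w = \<chi> h w * \<chi> h' w"
   and w: "w \<in> bvecs r"
  shows "(\<Sum>u\<in>bvecs r. \<chi> u w) = (if \<forall>u\<in>bvecs r. \<chi> u w = 1 then 2^r else 0)"
proof (cases "\<forall>u\<in>bvecs r. \<chi> u w = 1")
  case True then show ?thesis by (simp add: card_bvecs)
next
  case False
  then obtain u0 where u0: "u0 \<in> bvecs r" "\<chi> u0 w = -1" using pm w by blast
  have "(\<Sum>u\<in>bvecs r. \<chi> u w) = (\<Sum>u\<in>bvecs r. \<chi> (xv u u0) w)"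
    using sum.reindex_bij_betw[OF bij_xv[OF u0(1)], of "\<lambda>u. \<chi> u w"] by simp
  also have "\<dots> = (\<Sum>u\<in>bvecs r. - \<chi> u w)"
    by (rule sum.cong) (use lin u0 w in auto)
  finally show ?thesis using False by (simp add: sum_negf)
qed

lemma gauss_bound:
  fixes g :: "(nat\<Rightarrow>bool) \<Rightarrow> complex" and \<chi> :: "(nat\<Rightarrow>bool) \<Rightarrow> (nat\<Rightarrow>bool) \<Rightarrow> real"
  assumes unit: "\<forall>h\<in>bvecs r. cmod (g h) = 1"
   and mult: "\<forall>h\<in>bvecs r. \<forall>w\<in>bvecs r. g (xv h w) = g h * g w * of_real (\<chi> h w)"
   and pm: "\<forall>h\<in>bvecs r. \<forall>w\<in>bvecs r. \<chi> h w = 1 \<or> \<chi> h w = -1"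
   and sym: "\<forall>h\<in>bvecs r. \<forall>w\<in>bvecs r. \<chi> h w = \<chi> w h"
   and lin: "\<forall>h\<in>bvecs r. \<forall>h'\<in>bvecs r. \<forall>w\<in>bvecs r. \<chi> (xv h h') w = \<chi> h w * \<chi> h' w"
  shows "(\<forall>h\<in>bvecs r. g h = 1) \<or> (cmod (\<Sum>h\<in>bvecs r. g h))^2 \<le> (2^r)^2/2"
proof -
  define G where "G = bvecs r"
  define s where "s = (\<Sum>h\<in>G. g h)"
  define N :: real where "N = 2^r"
  define R where "R = {w\<in>G. \<forall>u\<in>G. \<chi> u w = 1}"
  have fG: "finite G" and cG: "card G = N" unfolding G_def N_def by (auto simp: card_bvecs)
  have RG: "R \<subseteq> G" unfolding R_def by auto
  have fR: "finite R" using fG RG finite_subset by blast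
  have "complex_of_real ((cmod s)^2) = cnj s * s" by (metis complex_norm_square mult.commute)
  also have "\<dots> = (\<Sum>u\<in>G. \<Sum>v\<in>G. cnj (g u) * g v)" unfolding s_def cnj_sum sum_product ..
  also have "\<dots> = (\<Sum>u\<in>G. \<Sum>w\<in>G. g w * of_real (\<chi> u w))"
  proof (rule sum.cong[OF refl])
    fix u assume u: "u \<in> G"
    have "(\<Sum>v\<in>G. cnj (g u) * g v) = (\<Sum>w\<in>G. cnj (g u) * g (xv w u))"
      using sum.reindex_bij_betw[OF bij_xv[of u r], of "\<lambda>v. cnj (g u) * g v"] u unfolding G_def by simp
    also have "\<dots> = (\<Sum>w\<in>G. g w * of_real (\<chi> u w))"
    proof (rule sum.cong[OF refl])
      fix w assume w: "w \<in> G"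
      have "g (xv w u) = g u * g w * of_real (\<chi> u w)"
        using mult u w unfolding G_def by (simp add: xv_comm)
      moreover have "cnj (g u) * g u = 1" using unit u unit_cnj unfolding G_def by blast
      ultimately show "cnj (g u) * g (xv w u) = g w * of_real (\<chi> u w)"
        by (metis (no_types, lifting) mult.assoc mult.commute mult_1)
    qed
    finally show "(\<Sum>v\<in>G. cnj (g u) * g v) = (\<Sum>w\<in>G. g w * of_real (\<chi> u w))" .
  qed
  also have "\<dots> = (\<Sum>w\<in>G. g w * of_real (\<Sum>u\<in>G. \<chi> u w))"
    by (subst sum.swap) (simp add: sum_distrib_left)
  also have "\<dots> = (\<Sum>w\<in>G. if w \<in> R then of_real N * g w else 0)"
  proof (rule sum.cong[OF refl])
    fix w assume w: "w \<in> G"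
    show "g w * of_real (\<Sum>u\<in>G. \<chi> u w) = (if w \<in> R then of_real N * g w else 0)"
      using char_sum[OF pm lin, of w] w unfolding G_def R_def N_def by auto
  qed
  also have "\<dots> = of_real N * (\<Sum>w\<in>R. g w)"
    using fG RG by (simp add: sum.If_cases Int_absorb1 sum_distrib_left)
  finally have E: "complex_of_real ((cmod s)^2) = of_real N * (\<Sum>w\<in>R. g w)" .
  have N0: "N > 0" unfolding N_def by simp
  show ?thesis
  proof (cases "R = G")
    case True
    then have E': "complex_of_real ((cmod s)^2) = of_real N * s" using E s_def by simp
    then have "(cmod s)^2 = N * cmod s"
      by (metis N0 abs_of_pos norm_mult norm_of_real power2_eq_square abs_norm_cancel)
    then have "cmod s = 0 \<or> cmod s = N" by (simp add: power2_eq_square)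
    then show ?thesis
    proof
      assume "cmod s = 0" then show ?thesis unfolding s_def G_def by simp
    next
      assume cs: "cmod s = N"
      have "of_real N * s = of_real N * of_real N" using E' cs by (metis of_real_mult power2_eq_square)
      then have sN: "s = of_real N" using N0 by (metis mult_left_cancel of_real_eq_0_iff less_irrefl)
      have "\<forall>h\<in>G. g h = 1"
      proof (rule ccontr)
        assume "\<not> (\<forall>h\<in>G. g h = 1)"
        then obtain h where h: "h \<in> G" "g h \<noteq> 1" by blast
        have le: "\<forall>x\<in>G. Re (g x) \<le> 1" using unit complex_Re_le_cmod unfolding G_def by metis
        have "Re (g h) < 1" using le h unit unit_re1 unfolding G_def by force
        then have "(\<Sum>x\<in>G. Re (g x)) < (\<Sum>x\<in>G. 1)"
          using sum_strict_mono_ex1[OF fG, of "\<lambda>x. Re (g x)" "\<lambda>_. 1"] le h by auto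
        moreover have "(\<Sum>x\<in>G. Re (g x)) = N" using arg_cong[OF sN, of Re] unfolding s_def by (simp add: Re_sum)
        ultimately show False using cG by simp
      qed
      then show ?thesis unfolding G_def by blast
    qed
  next
    case False
    then obtain w0 where w0: "w0 \<in> G" "w0 \<notin> R" using RG by blast
    have clos: "\<And>w. w \<in> R \<Longrightarrow> xv w w0 \<notin> R"
    proof
      fix w assume w: "w \<in> R" and ww: "xv w w0 \<in> R"
      have "xv w (xv w w0) = w0" by (simp add: xv_assoc[symmetric])
      moreover have "xv w (xv w w0) \<in> R"
      proof -
        have "\<forall>u\<in>G. \<chi> u (xv w (xv w w0)) = 1"
        proof
          fix u assume u: "u \<in> G"
          have m1: "xv w w0 \<in> G" using w w0 RG unfolding G_def by auto
          have "\<chi> u (xv w (xv w w0)) = \<chi> w0 u" using sym u w0 unfolding G_def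
            by (simp add: xv_assoc[symmetric])
          also have "\<dots> = \<chi> (xv w (xv w w0)) u" by (simp add: xv_assoc[symmetric])
          also have "\<dots> = \<chi> w u * \<chi> (xv w w0) u" using lin u m1 w RG unfolding G_def by blast
          also have "\<dots> = \<chi> u w * \<chi> u (xv w w0)" using sym u m1 w RG unfolding G_def by auto
          finally show "\<chi> u (xv w (xv w w0)) = 1" using w ww u unfolding R_def by simp
        qed
        then show ?thesis using w0 unfolding R_def by (simp add: xv_assoc[symmetric])
      qed
      ultimately show False using w0 by simp
    qed
    have "(\<lambda>w. xv w w0) ` R \<subseteq> G - R" using clos RG w0 unfolding G_def by auto
    moreover have "inj_on (\<lambda>w. xv w w0) R" by (rule inj_onI) (metis xv_cancel(1))
    ultimately have "card R \<le> card (G - R)"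
      by (metis card_image card_mono fG finite_Diff)
    then have cR: "2 * real (card R) \<le> N" using cG RG fR by (simp add: card_Diff_subset)
    have "(cmod s)^2 = N * cmod (\<Sum>w\<in>R. g w)"
      using arg_cong[OF E, of cmod] N0 by (simp add: norm_mult norm_power)
    also have "\<dots> \<le> N * (\<Sum>w\<in>R. cmod (g w))" using N0 norm_sum by (simp add: mult_left_mono)
    also have "\<dots> = N * card R" using unit RG unfolding G_def by (subst sum.cong[OF refl, of R _ "\<lambda>_. 1"]) auto
    also have "\<dots> \<le> N * (N/2)" using cR N0 by simp
    finally show ?thesis unfolding s_def G_def N_def by (simp add: power2_eq_square)
  qed
qed



definition Qf :: "nat \<Rightarrow> (nat\<Rightarrow>nat\<Rightarrow>bool) \<Rightarrow> (nat\<Rightarrow>bool) \<Rightarrow> nat" where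
  "Qf r S u = (\<Sum>i<r. \<Sum>j<r. of_bool (S i j \<and> u i \<and> u j))"
definition Bf :: "nat \<Rightarrow> (nat\<Rightarrow>nat\<Rightarrow>bool) \<Rightarrow> (nat\<Rightarrow>bool) \<Rightarrow> (nat\<Rightarrow>bool) \<Rightarrow> nat" where
  "Bf r S u w = (\<Sum>i<r. \<Sum>j<r. of_bool (S i j \<and> u i \<and> w j))"
definition Df :: "nat \<Rightarrow> (nat\<Rightarrow>bool) \<Rightarrow> (nat\<Rightarrow>bool) \<Rightarrow> nat" where
  "Df m b u = (\<Sum>i<m. of_bool (b i \<and> u i))"
definition Ef :: "nat \<Rightarrow> nat \<Rightarrow> (nat\<Rightarrow>nat\<Rightarrow>bool) \<Rightarrow> (nat\<Rightarrow>bool) \<Rightarrow> (nat\<Rightarrow>bool) \<Rightarrow> complex" where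
  "Ef m r S b u = \<i> ^ (Qf r S u + 2 * Df m b u)"

lemma swap0:
  fixes F :: "nat \<Rightarrow> nat \<Rightarrow> int"
  shows "(\<Sum>i<r. \<Sum>j<r. F i j - F j i) = 0"
proof -
  have "(\<Sum>i<r. \<Sum>j<r. F j i) = (\<Sum>i<r. \<Sum>j<r. F i j)" by (rule sum.swap)
  then show ?thesis by (simp add: sum_subtractf)
qed

lemma Q_xv:
  fixes u w :: "nat \<Rightarrow> bool"
  assumes sy: "is_symr r S"
  defines "s \<equiv> \<lambda>i j. (of_bool (S i j) :: int)"
  defines "x \<equiv> \<lambda>i. (of_bool (u i) :: int)"
  defines "y \<equiv> \<lambda>i. (of_bool (w i) :: int)"
  shows "int (Qf r S (xv u w)) = int (Qf r S u) + int (Qf r S w) + 2 * int (Bf r S u w)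
     + 4 * (\<Sum>i<r. \<Sum>j<r. s i j * x i * y i * x j * y j - s i j * x i * y i * x j - s i j * x i * y i * y j)"
proof -
  define F1 where "F1 = (\<lambda>i j. s i j * y i * x j)"
  define F2 where "F2 = (\<lambda>i j. s i j * x i * y i * x j)"
  define F3 where "F3 = (\<lambda>i j. s i j * x i * y i * y j)"
  define K where "K = (\<lambda>i j. s i j * x i * y i * x j * y j - s i j * x i * y i * x j - s i j * x i * y i * y j)"
  have pt: "(of_bool (S i j \<and> xv u w i \<and> xv u w j) :: int) =
     (s i j * x i * x j + s i j * y i * y j + 2 * (s i j * x i * y j) + 4 * K i j)
     + ((F1 i j - F1 j i) + 2 * (F2 i j - F2 j i) + 2 * (F3 i j - F3 j i))" if "i < r" "j < r" for i j
  proof -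
    have "S j i = S i j" using sy that unfolding is_symr_def by auto
    then show ?thesis unfolding s_def x_def y_def F1_def F2_def F3_def K_def
      by (cases "S i j"; cases "u i"; cases "w i"; cases "u j"; cases "w j") simp_all
  qed
  have "int (Qf r S (xv u w)) = (\<Sum>i<r. \<Sum>j<r. (of_bool (S i j \<and> xv u w i \<and> xv u w j) :: int))"
    unfolding Qf_def by simp
  also have "\<dots> = (\<Sum>i<r. \<Sum>j<r. (s i j * x i * x j + s i j * y i * y j + 2 * (s i j * x i * y j) + 4 * K i j)
     + ((F1 i j - F1 j i) + 2 * (F2 i j - F2 j i) + 2 * (F3 i j - F3 j i)))"
    using pt by simp
  also have "\<dots> = (\<Sum>i<r. \<Sum>j<r. s i j * x i * x j + s i j * y i * y j + 2 * (s i j * x i * y j) + 4 * K i j)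
     + ((\<Sum>i<r. \<Sum>j<r. F1 i j - F1 j i) + 2 * (\<Sum>i<r. \<Sum>j<r. F2 i j - F2 j i) + 2 * (\<Sum>i<r. \<Sum>j<r. F3 i j - F3 j i))"
    by (simp add: sum.distrib sum_distrib_left)
  also have "\<dots> = (\<Sum>i<r. \<Sum>j<r. s i j * x i * x j + s i j * y i * y j + 2 * (s i j * x i * y j) + 4 * K i j)"
    by (simp only: swap0 mult_zero_right add_0_right)
  also have "\<dots> = int (Qf r S u) + int (Qf r S w) + 2 * int (Bf r S u w) + 4 * (\<Sum>i<r. \<Sum>j<r. K i j)"
    unfolding Qf_def Bf_def s_def x_def y_def by (simp add: sum.distrib sum_distrib_left of_bool_conj mult.assoc del: sum_of_bool_eq sum_of_bool_mult_eq)
  finally show ?thesis unfolding K_def .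
qed

lemma D_xv: "int (Df m b (xv u w)) = int (Df m b u) + int (Df m b w) - 2 * int (\<Sum>i<m. of_bool (b i \<and> u i \<and> w i))"
proof -
  have "(\<Sum>i<m. (of_bool (b i \<and> xv u w i)::nat)) + 2 * (\<Sum>i<m. of_bool (b i \<and> u i \<and> w i))
     = (\<Sum>i<m. of_bool (b i \<and> u i)) + (\<Sum>i<m. of_bool (b i \<and> w i))"
  proof -
    have "(\<Sum>i<m. (of_bool (b i \<and> xv u w i)::nat) + 2 * of_bool (b i \<and> u i \<and> w i))
      = (\<Sum>i<m. of_bool (b i \<and> u i) + of_bool (b i \<and> w i))"
      by (rule sum.cong[OF refl]) auto
    then show ?thesis by (simp only: sum.distrib sum_distrib_left)
  qed
  then show ?thesis unfolding Df_def by linarith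
qed

lemma i_pow_mod: "\<i> ^ a = \<i> ^ (a mod 4)"
proof -
  have "\<i> ^ a = \<i> ^ (4 * (a div 4) + a mod 4)" by simp
  also have "\<dots> = (\<i> ^ 4) ^ (a div 4) * \<i> ^ (a mod 4)" by (simp only: power_add power_mult)
  also have "(\<i> ^ 4) = (1::complex)" by (simp add: power4_eq_xxxx)
  finally show ?thesis by simp
qed

lemma i_pow_cong: "int a = int c + 4 * k \<Longrightarrow> \<i> ^ a = \<i> ^ c"
proof -
  assume h: "int a = int c + 4 * k"
  then have "a mod 4 = c mod 4" by presburger
  then show ?thesis by (metis i_pow_mod)
qed

lemma arith_aux: "int q' = int qu + int qw + 2 * int bb + 4 * K \<Longrightarrow> int d' = int du + int dw - 2 * X
   \<Longrightarrow> int (q' + 2 * d') = int (qu + 2 * du + (qw + 2 * dw) + 2 * bb) + 4 * (K - X)"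
  by simp

lemma Ef_xv:
  assumes sy: "is_symr r S"
  shows "Ef m r S b (xv u w) = Ef m r S b u * Ef m r S b w * (-1) ^ Bf r S u w"
proof -
  obtain K where K: "int (Qf r S (xv u w)) = int (Qf r S u) + int (Qf r S w) + 2 * int (Bf r S u w) + 4 * K"
    using Q_xv[OF sy, of u w] by blast
  have "\<i> ^ (Qf r S (xv u w) + 2 * Df m b (xv u w)) = \<i> ^ ((Qf r S u + 2 * Df m b u) + (Qf r S w + 2 * Df m b w) + 2 * Bf r S u w)"
    by (rule i_pow_cong[where k="K - int (\<Sum>i<m. of_bool (b i \<and> u i \<and> w i))"])
       (rule arith_aux[OF K D_xv[of m b u w]])
  also have "\<dots> = Ef m r S b u * Ef m r S b w * (-1) ^ Bf r S u w"
  proof -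
    have "\<i> ^ (2 * Bf r S u w) = (-1::complex) ^ Bf r S u w" by (simp only: power_mult) simp
    then show ?thesis unfolding Ef_def by (simp only: power_add)
  qed
  finally show ?thesis unfolding Ef_def .
qed

lemma Bf_sym: "is_symr r S \<Longrightarrow> Bf r S u w = Bf r S w u"
proof -
  assume sy: "is_symr r S"
  have "Bf r S u w = (\<Sum>j<r. \<Sum>i<r. of_bool (S i j \<and> u i \<and> w j))" unfolding Bf_def by (rule sum.swap)
  also have "\<dots> = Bf r S w u" unfolding Bf_def
    by (rule sum.cong[OF refl], rule sum.cong[OF refl]) (use sy in \<open>auto simp: is_symr_def\<close>)
  finally show ?thesis .
qed

lemma Bf_lin: "Bf r S (xv h h') w + 2 * (\<Sum>i<r. \<Sum>j<r. of_bool (S i j \<and> h i \<and> h' i \<and> w j)) = Bf r S h w + Bf r S h' w"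
proof -
  have "(\<Sum>i<r. \<Sum>j<r. (of_bool (S i j \<and> xv h h' i \<and> w j)::nat) + 2 * of_bool (S i j \<and> h i \<and> h' i \<and> w j))
     = (\<Sum>i<r. \<Sum>j<r. of_bool (S i j \<and> h i \<and> w j) + of_bool (S i j \<and> h' i \<and> w j))"
    by (rule sum.cong[OF refl], rule sum.cong[OF refl]) auto
  then show ?thesis unfolding Bf_def by (simp only: sum.distrib sum_distrib_left)
qed

lemma m1_lin: "((-1::real) ^ Bf r S (xv h h') w) = (-1) ^ Bf r S h w * (-1) ^ Bf r S h' w"
proof -
  have "((-1::real) ^ Bf r S (xv h h') w) = (-1) ^ (Bf r S (xv h h') w + 2 * (\<Sum>i<r. \<Sum>j<r. of_bool (S i j \<and> h i \<and> h' i \<and> w j)))"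
    by (simp add: power_add power_mult)
  also have "\<dots> = (-1) ^ Bf r S h w * (-1) ^ Bf r S h' w" by (simp only: Bf_lin power_add)
  finally show ?thesis .
qed

lemma Ef_unit: "cmod (Ef m r S b u) = 1" unfolding Ef_def by (simp add: norm_power)



lemma prod_of_bool_c: "finite A \<Longrightarrow> (\<Prod>i\<in>A. (of_bool (P i) :: complex)) = of_bool (\<forall>i\<in>A. P i)"
  by (induct A rule: finite_induct) auto

definition Uset :: "nat \<Rightarrow> nat \<Rightarrow> (nat\<Rightarrow>bool) \<Rightarrow> (nat\<Rightarrow>bool) set" where
  "Uset m r b = {u\<in>bvecs m. \<forall>i\<in>{r..<m}. b i = u i}"
definition tlo :: "nat \<Rightarrow> (nat\<Rightarrow>bool) \<Rightarrow> (nat\<Rightarrow>bool)" where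
  "tlo r b = (\<lambda>i. r \<le> i \<and> b i)"

lemma tlo_bvecs: "b \<in> bvecs m \<Longrightarrow> tlo r b \<in> bvecs m" unfolding tlo_def bvecs_iff by auto

lemma U_bij:
  assumes rm: "r \<le> m" and b: "b \<in> bvecs m"
  shows "bij_betw (\<lambda>h. xv h (tlo r b)) (bvecs r) (Uset m r b)"
proof (rule bij_betw_byWitness[where f'="\<lambda>h. xv h (tlo r b)"])
  show "(\<lambda>h. xv h (tlo r b)) ` bvecs r \<subseteq> Uset m r b"
  proof
    fix x assume "x \<in> (\<lambda>h. xv h (tlo r b)) ` bvecs r"
    then obtain h where h: "h \<in> bvecs r" "x = xv h (tlo r b)" by auto
    have "xv h (tlo r b) \<in> bvecs m" using bvecs_mono[OF rm h(1)] tlo_bvecs[OF b] by blast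
    moreover have "\<forall>i\<in>{r..<m}. b i = xv h (tlo r b) i" using h(1) by (auto simp: bvecs_iff tlo_def)
    ultimately show "x \<in> Uset m r b" using h(2) unfolding Uset_def by simp
  qed
  show "(\<lambda>h. xv h (tlo r b)) ` Uset m r b \<subseteq> bvecs r"
  proof
    fix x assume "x \<in> (\<lambda>h. xv h (tlo r b)) ` Uset m r b"
    then obtain u where u: "u \<in> Uset m r b" "x = xv u (tlo r b)" by auto
    have "\<forall>i. xv u (tlo r b) i \<longrightarrow> i < r"
    proof (intro allI impI, rule ccontr)
      fix i assume i: "xv u (tlo r b) i" "\<not> i < r"
      show False
      proof (cases "i < m")
        case True
        then have "b i = u i" using u(1) i(2) unfolding Uset_def by simp
        then show False using i by (simp add: tlo_def)
      next
        case False
        then have "\<not> u i" "\<not> b i" using u(1) b unfolding Uset_def bvecs_iff by auto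
        then show False using i by (simp add: tlo_def)
      qed
    qed
    then show "x \<in> bvecs r" using u(2) by (simp add: bvecs_iff)
  qed
qed simp_all

lemma card_U: "r \<le> m \<Longrightarrow> b \<in> bvecs m \<Longrightarrow> card (Uset m r b) = 2 ^ r"
  using bij_betw_same_card[OF U_bij] card_bvecs by metis

lemma U_sub: "Uset m r b \<subseteq> bvecs m" unfolding Uset_def by auto

lemma U_aff: "u \<in> Uset m r b \<Longrightarrow> v \<in> Uset m r b \<Longrightarrow> w \<in> Uset m r b \<Longrightarrow> xv (xv u v) w \<in> Uset m r b"
  unfolding Uset_def by auto

lemma bssc_out: "a \<notin> bvecs m \<Longrightarrow> bssc m r H piv S b a = 0"
  unfolding bssc_def by simp

lemma cinner_reindex:
  assumes "bij_betw P (bvecs m) (bvecs m)"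
  shows "cinner m w1 w2 = (\<Sum>u\<in>bvecs m. cnj (w1 (P u)) * w2 (P u))"
  unfolding cinner_def using sum.reindex_bij_betw[OF assms, of "\<lambda>a. cnj (w1 a) * w2 a"] by simp

context cref begin

abbreviation "P \<equiv> Pmul m r H piv"

lemma bssc_Pmul: "u \<in> bvecs m \<Longrightarrow> bssc m r H piv S b (P u)
   = complex_of_real (1 / sqrt (2 ^ r)) * Ef m r S b u * of_bool (u \<in> Uset m r b)"
  unfolding bssc_def Ef_def Qf_def Df_def Let_def using Pmul_bvecs the_Pmul
  by (simp add: prod_of_bool_c Uset_def)

lemma norm_bssc:
  assumes b: "b \<in> bvecs m"
  shows "cmod (bssc m r H piv S b a) = (if a \<in> P ` Uset m r b then 1 / sqrt (2 ^ r) else 0)"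
proof (cases "a \<in> bvecs m")
  case True
  then obtain u where u: "u \<in> bvecs m" "a = P u" using Pmul_bij by (metis bij_betw_imp_surj_on imageE)
  have "a \<in> P ` Uset m r b \<longleftrightarrow> u \<in> Uset m r b"
  proof
    assume "a \<in> P ` Uset m r b"
    then obtain x where x: "x \<in> Uset m r b" "a = P x" by auto
    then have "x \<in> bvecs m" using U_sub by auto
    then have "x = u" using Pmul_inj u x by (auto dest: inj_onD)
    then show "u \<in> Uset m r b" using x by simp
  qed (use u in auto)
  then show ?thesis using u bssc_Pmul[OF u(1), of S b] by (simp add: norm_mult norm_divide Ef_unit)
next
  case False
  then show ?thesis using bssc_out Pmul_bvecs by auto
qed

lemma A_aff: "a \<in> P ` Uset m r b \<Longrightarrow> c \<in> P ` Uset m r b \<Longrightarrow> d \<in> P ` Uset m r b \<Longrightarrow> xv (xv a c) d \<in> P ` Uset m r b"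
  using U_aff by (auto simp: Pmul_xv[symmetric])

lemma card_A: "b \<in> bvecs m \<Longrightarrow> card (P ` Uset m r b) = 2 ^ r"
  using card_U[OF rm] card_image inj_on_subset[OF Pmul_inj U_sub] by metis

lemma A_sub: "P ` Uset m r b \<subseteq> bvecs m" using Pmul_bvecs by auto

end


lemma xv_fun_eq: "xv (xv (xv (xv a x0) t) x0) a = t" unfolding xv_def by auto

lemma inter_half:
  assumes f1: "finite A1" and f2: "finite A2" and cc: "card A1 = card A2" and ne: "A1 \<noteq> A2"
    and aff1: "\<forall>a\<in>A1. \<forall>b\<in>A1. \<forall>c\<in>A1. xv (xv a b) c \<in> A1"
    and aff2: "\<forall>a\<in>A2. \<forall>b\<in>A2. \<forall>c\<in>A2. xv (xv a b) c \<in> A2"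
  shows "2 * card (A1 \<inter> A2) \<le> card A1"
proof (cases "A1 \<inter> A2 = {}")
  case True then show ?thesis by simp
next
  case False
  then obtain x0 where x0: "x0 \<in> A1" "x0 \<in> A2" by blast
  have "\<not> A1 \<subseteq> A2" using card_subset_eq[OF f2 _ cc] ne by blast
  then obtain t where t: "t \<in> A1" "t \<notin> A2" by blast
  define \<phi> where "\<phi> = (\<lambda>a. xv (xv a x0) t)"
  have "\<phi> ` (A1 \<inter> A2) \<subseteq> A1 - (A1 \<inter> A2)"
  proof
    fix y assume "y \<in> \<phi> ` (A1 \<inter> A2)"
    then obtain a where a: "a \<in> A1" "a \<in> A2" "y = \<phi> a" by auto
    have "y \<in> A1" using aff1 a x0 t unfolding \<phi>_def by blast
    moreover have "y \<notin> A2"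
    proof
      assume "y \<in> A2"
      then have "xv (xv y x0) a \<in> A2" using aff2 a x0 by blast
      then show False using t a(3) xv_fun_eq unfolding \<phi>_def by metis
    qed
    ultimately show "y \<in> A1 - (A1 \<inter> A2)" by blast
  qed
  moreover have "inj_on \<phi> (A1 \<inter> A2)" unfolding \<phi>_def by (rule inj_onI) (metis xv_cancel(1))
  ultimately have "card (A1 \<inter> A2) \<le> card (A1 - (A1 \<inter> A2))"
    by (metis card_image card_mono f1 finite_Diff)
  then show ?thesis using f1 by (simp add: card_Diff_subset)
qed

lemma nat_bound:
  fixes n :: nat
  assumes "n \<le> 2 ^ r1" "n \<le> 2 ^ r2" "r1 = r2 \<Longrightarrow> 2 * n \<le> 2 ^ r1"
  shows "2 * n^2 \<le> 2 ^ (r1 + r2)"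
proof (cases r1 r2 rule: linorder_cases)
  case less
  then have "(2::nat) ^ (r1 + 1) \<le> 2 ^ r2" by (intro power_increasing) auto
  then have "2 * n^2 \<le> 2 ^ (r1 + 1) * 2 ^ r1"
    using assms(1) by (simp add: power2_eq_square mult_le_mono)
  also have "\<dots> \<le> 2 ^ r2 * 2 ^ r1" using \<open>(2::nat) ^ (r1 + 1) \<le> 2 ^ r2\<close> by simp
  finally show ?thesis by (simp add: power_add mult.commute)
next
  case equal
  then have "2 * n^2 = (2 * n) * n" by (simp add: power2_eq_square)
  also have "\<dots> \<le> 2 ^ r1 * 2 ^ r2" using assms equal by (simp add: mult_le_mono)
  finally show ?thesis by (simp add: power_add)
next
  case greater
  then have "(2::nat) ^ (r2 + 1) \<le> 2 ^ r1" by (intro power_increasing) auto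
  then have "2 * n^2 \<le> 2 ^ (r2 + 1) * 2 ^ r2"
    using assms(2) by (simp add: power2_eq_square mult_le_mono)
  also have "\<dots> \<le> 2 ^ r1 * 2 ^ r2" using \<open>(2::nat) ^ (r2 + 1) \<le> 2 ^ r1\<close> by simp
  finally show ?thesis by (simp add: power_add)
qed

lemma real_bound:
  fixes n :: nat
  assumes "2 * n^2 \<le> 2 ^ (r1 + r2)"
  shows "real n * (1 / sqrt (2 ^ r1)) * (1 / sqrt (2 ^ r2)) \<le> 1 / sqrt 2"
proof -
  have "sqrt (2 * real n ^ 2) \<le> sqrt (2 ^ (r1 + r2))"
    using assms by (metis (mono_tags) of_nat_le_iff of_nat_mult of_nat_numeral of_nat_power real_sqrt_le_mono)
  then have "sqrt 2 * real n \<le> sqrt (2 ^ r1) * sqrt (2 ^ r2)"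
    by (simp add: real_sqrt_mult power_add)
  moreover have "sqrt (2 ^ r1) > 0" "sqrt (2 ^ r2) > 0" "sqrt 2 > 0" by auto
  ultimately show ?thesis by (simp add: field_simps)
qed

lemma caseA:
  fixes w1 w2 :: "(nat\<Rightarrow>bool) \<Rightarrow> complex"
  assumes s1: "A1 \<subseteq> bvecs m" and s2: "A2 \<subseteq> bvecs m"
    and c1: "card A1 = 2 ^ r1" and c2: "card A2 = 2 ^ r2" and ne: "A1 \<noteq> A2"
    and aff1: "\<forall>a\<in>A1. \<forall>b\<in>A1. \<forall>c\<in>A1. xv (xv a b) c \<in> A1"
    and aff2: "\<forall>a\<in>A2. \<forall>b\<in>A2. \<forall>c\<in>A2. xv (xv a b) c \<in> A2"
    and n1: "\<forall>a. cmod (w1 a) = (if a \<in> A1 then 1 / sqrt (2 ^ r1) else 0)"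
    and n2: "\<forall>a. cmod (w2 a) = (if a \<in> A2 then 1 / sqrt (2 ^ r2) else 0)"
  shows "cmod (cinner m w1 w2) \<le> 1 / sqrt 2"
proof -
  have f1: "finite A1" and f2: "finite A2" using s1 s2 by (meson finite_bvecs finite_subset)+
  have "cmod (cinner m w1 w2) \<le> (\<Sum>a\<in>bvecs m. cmod (cnj (w1 a) * w2 a))"
    unfolding cinner_def by (rule norm_sum)
  also have "\<dots> = (\<Sum>a\<in>bvecs m. if a \<in> A1 \<inter> A2 then (1 / sqrt (2 ^ r1)) * (1 / sqrt (2 ^ r2)) else 0)"
    by (rule sum.cong[OF refl]) (simp add: norm_mult n1 n2)
  also have "\<dots> = real (card (A1 \<inter> A2)) * (1 / sqrt (2 ^ r1)) * (1 / sqrt (2 ^ r2))"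
  proof -
    have "bvecs m \<inter> {a \<in> A1. a \<in> A2} = A1 \<inter> A2" using s1 by auto
    then show ?thesis by (simp add: sum.If_cases)
  qed
  also have "\<dots> \<le> 1 / sqrt 2"
  proof (rule real_bound, rule nat_bound)
    show "card (A1 \<inter> A2) \<le> 2 ^ r1" using c1 f1 by (metis card_mono inf_le1)
    show "card (A1 \<inter> A2) \<le> 2 ^ r2" using c2 f2 by (metis card_mono inf_le2)
    show "2 * card (A1 \<inter> A2) \<le> 2 ^ r1" if "r1 = r2"
      using inter_half[OF f1 f2 _ ne aff1 aff2] c1 c2 that by simp
  qed
  finally show ?thesis .
qed



definition lead :: "nat \<Rightarrow> (nat \<Rightarrow> bool) \<Rightarrow> bool" where
  "lead i v \<longleftrightarrow> v i \<and> (\<forall>i'<i. \<not> v i')"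

lemma lead_unique: "lead i v \<Longrightarrow> lead i' v \<Longrightarrow> i = i'"
  unfolding lead_def by (metis linorder_neqE_nat)

lemma sum_delta_nat: "j < (r::nat) \<Longrightarrow> (\<Sum>j'<r. (of_bool (P j' \<and> j' = j) :: nat)) = of_bool (P j)"
proof -
  assume j: "j < r"
  have "(\<Sum>j'<r. (of_bool (P j' \<and> j' = j)::nat)) = (\<Sum>j'<r. if j' = j then of_bool (P j) else 0)"
    by (rule sum.cong) auto
  also have "\<dots> = of_bool (P j)" using j by (subst sum.delta) auto
  finally show ?thesis .
qed

context cref begin

lemma Pmul_head: "h \<in> bvecs r \<Longrightarrow> P h i = (i < m \<and> odd (\<Sum>j<r. (of_bool (H i j \<and> h j) :: nat)))"
proof -
  assume h: "h \<in> bvecs r"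
  have "(\<Sum>k<m - r. (of_bool (np ! k = i \<and> h (r + k)) :: nat)) = 0"
    by (rule sum.neutral) (use h in \<open>auto simp: bvecs_iff\<close>)
  then show ?thesis unfolding Pmul_def by simp
qed

lemma Pmul_col: "j < r \<Longrightarrow> P (\<lambda>i. i = j) i = (i < m \<and> H i j)"
proof -
  assume j: "j < r"
  have e: "(\<lambda>i. i = j) \<in> bvecs r" using j by (simp add: bvecs_iff)
  show ?thesis using Pmul_head[OF e, of i] sum_delta_nat[OF j, of "H i"] by simp
qed

lemma piv_lead: "piv ` {..<r} = {i. \<exists>h\<in>bvecs r. lead i (P h)}"
proof
  show "piv ` {..<r} \<subseteq> {i. \<exists>h\<in>bvecs r. lead i (P h)}"
  proof
    fix i assume "i \<in> piv ` {..<r}"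
    then obtain j where j: "j < r" "i = piv j" by auto
    have e: "(\<lambda>i. i = j) \<in> bvecs r" using j by (simp add: bvecs_iff)
    have "lead (piv j) (P (\<lambda>i. i = j))"
      unfolding lead_def using Pmul_col[OF j(1)] H_piv[OF j(1) j(1)] piv_lt[OF j(1)] H_above[OF j(1)] by auto
    then show "i \<in> {i. \<exists>h\<in>bvecs r. lead i (P h)}" using e j by blast
  qed
  show "{i. \<exists>h\<in>bvecs r. lead i (P h)} \<subseteq> piv ` {..<r}"
  proof
    fix i assume "i \<in> {i. \<exists>h\<in>bvecs r. lead i (P h)}"
    then obtain h where h: "h \<in> bvecs r" "lead i (P h)" by auto
    have "\<exists>j. h j"
    proof (rule ccontr)
      assume "\<not> (\<exists>j. h j)"
      then have "h = zv" by (auto simp: zv_def)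
      then have "P h = zv" using Pmul_xv[of m r H piv zv zv] by simp
      then show False using h(2) unfolding lead_def by simp
    qed
    define j0 where "j0 = (LEAST j. h j)"
    have hj0: "h j0" unfolding j0_def using \<open>\<exists>j. h j\<close> by (metis LeastI)
    have j0r: "j0 < r" using hj0 h(1) by (simp add: bvecs_iff)
    have lt: "\<And>j. h j \<Longrightarrow> j0 \<le> j" unfolding j0_def by (rule Least_le)
    have "lead (piv j0) (P h)"
      unfolding lead_def
    proof
      show "P h (piv j0)" using Pmul_piv[OF j0r] hj0 by simp
      show "\<forall>i'<piv j0. \<not> P h i'"
      proof (intro allI impI)
        fix i' assume i': "i' < piv j0"
        have "(\<Sum>j<r. (of_bool (H i' j \<and> h j) :: nat)) = 0"
        proof (rule sum.neutral, rule ballI)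
          fix j assume j: "j \<in> {..<r}"
          show "(of_bool (H i' j \<and> h j) :: nat) = 0"
          proof (cases "h j")
            case True
            then have "j0 \<le> j" by (rule lt)
            then have "piv j0 \<le> piv j" using piv_mono[of j0 j] j by (cases "j0 = j") auto
            then show ?thesis using H_above[of j i'] j i' by auto
          qed simp
        qed
        then show "\<not> P h i'" using Pmul_head[OF h(1), of i'] by simp
      qed
    qed
    then have "i = piv j0" using h(2) lead_unique by blast
    then show "i \<in> piv ` {..<r}" using j0r by auto
  qed
qed

lemma C_from_A:
  assumes b: "b \<in> bvecs m" and x: "x \<in> P ` Uset m r b"
  shows "(\<lambda>a. xv a x) ` (P ` Uset m r b) = P ` bvecs r"
proof -
  obtain u0 where u0: "u0 \<in> Uset m r b" "x = P u0" using x by auto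
  show ?thesis
  proof
    show "(\<lambda>a. xv a x) ` P ` Uset m r b \<subseteq> P ` bvecs r"
    proof
      fix y assume "y \<in> (\<lambda>a. xv a x) ` P ` Uset m r b"
      then obtain u where u: "u \<in> Uset m r b" "y = xv (P u) x" by auto
      have "xv u u0 \<in> bvecs r"
        unfolding bvecs_iff
      proof (intro allI impI, rule ccontr)
        fix i assume i: "xv u u0 i" "\<not> i < r"
        show False
        proof (cases "i < m")
          case True
          then have "b i = u i" "b i = u0 i" using u(1) u0(1) i(2) unfolding Uset_def by auto
          then show False using i by simp
        next
          case False
          then have "\<not> u i" "\<not> u0 i" using u(1) u0(1) unfolding Uset_def bvecs_iff by auto
          then show False using i by simp
        qed
      qed
      moreover have "y = P (xv u u0)" using u u0 by (simp add: Pmul_xv)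
      ultimately show "y \<in> P ` bvecs r" by blast
    qed
    show "P ` bvecs r \<subseteq> (\<lambda>a. xv a x) ` P ` Uset m r b"
    proof
      fix y assume "y \<in> P ` bvecs r"
      then obtain h where h: "h \<in> bvecs r" "y = P h" by auto
      have "xv h u0 \<in> Uset m r b"
        using h(1) u0(1) bvecs_mono[OF rm h(1)] unfolding Uset_def by (auto simp: bvecs_iff)
      moreover have "y = xv (P (xv h u0)) x" using h u0 by (simp add: Pmul_xv)
      ultimately show "y \<in> (\<lambda>a. xv a x) ` P ` Uset m r b" by blast
    qed
  qed
qed

end

lemma strict_enum_eq:
  fixes f g :: "nat \<Rightarrow> nat"
  assumes f: "\<forall>j k. j < k \<longrightarrow> k < r \<longrightarrow> f j < f k" and g: "\<forall>j k. j < k \<longrightarrow> k < r \<longrightarrow> g j < g k"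
    and im: "f ` {..<r} = g ` {..<r}"
  shows "\<forall>j<r. f j = g j"
proof (rule ccontr)
  assume "\<not> (\<forall>j<r. f j = g j)"
  then have ex: "\<exists>j. j < r \<and> f j \<noteq> g j" by blast
  define j where "j = (LEAST j. j < r \<and> f j \<noteq> g j)"
  have jr: "j < r" and jne: "f j \<noteq> g j" using LeastI_ex[OF ex] unfolding j_def by auto
  have below: "\<And>i. i < j \<Longrightarrow> f i = g i"
  proof -
    fix i assume i: "i < j"
    have "\<not> (i < r \<and> f i \<noteq> g i)" using not_less_Least[of i "\<lambda>j. j < r \<and> f j \<noteq> g j"] i unfolding j_def by blast
    then show "f i = g i" using i jr by auto
  qed
  have "f j \<in> f ` {..<r}" using jr by simp
  then have "f j \<in> g ` {..<r}" using im by simp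
  then obtain k where k: "k < r" "f j = g k" by auto
  have "g j \<in> g ` {..<r}" using jr by simp
  then have "g j \<in> f ` {..<r}" using im by simp
  then obtain l where l: "l < r" "g j = f l" by auto
  have nk: "\<not> k < j"
  proof
    assume kj: "k < j"
    then have "f k < f j" using f[rule_format, of k j] jr by simp
    moreover have "g k = f k" using below[OF kj] by simp
    ultimately show False using k by simp
  qed
  have nl: "\<not> l < j"
  proof
    assume lj: "l < j"
    then have "g l < g j" using g[rule_format, of l j] jr by simp
    moreover have "f l = g l" using below[OF lj] by simp
    ultimately show False using l by simp
  qed
  have "k \<noteq> j" using k jne by auto
  then have "j < k" using nk by simp
  then have "g j < g k" using g[rule_format, of j k] k(1) by simp
  have "l \<noteq> j" using l jne by auto
  then have "j < l" using nl by simp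
  then have "f j < f l" using f[rule_format, of j l] l(1) by simp
  show False using \<open>g j < g k\<close> \<open>f j < f l\<close> k l by simp
qed

lemma cref_unique:
  assumes c1: "cref m r H1 piv1" and c2: "cref m r H2 piv2"
    and C: "Pmul m r H1 piv1 ` bvecs r = Pmul m r H2 piv2 ` bvecs r"
  shows "Pmul m r H1 piv1 = Pmul m r H2 piv2"
proof -
  interpret c1: cref m r H1 piv1 by (rule c1)
  interpret c2: cref m r H2 piv2 by (rule c2)
  have gen: "\<And>Q. {i. \<exists>h\<in>bvecs r. lead i (Q h)} = {i. \<exists>v\<in>Q ` bvecs r. lead i v}" by auto
  have pim: "piv1 ` {..<r} = piv2 ` {..<r}" unfolding c1.piv_lead c2.piv_lead gen C ..
  have peq: "\<And>j. j < r \<Longrightarrow> piv1 j = piv2 j"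
  proof -
    have "\<forall>j<r. piv1 j = piv2 j"
    proof (rule strict_enum_eq[OF _ _ pim])
      show "\<forall>j k. j < k \<longrightarrow> k < r \<longrightarrow> piv1 j < piv1 k" using c1.piv_mono by blast
      show "\<forall>j k. j < k \<longrightarrow> k < r \<longrightarrow> piv2 j < piv2 k" using c2.piv_mono by blast
    qed
    then show "\<And>j. j < r \<Longrightarrow> piv1 j = piv2 j" by blast
  qed
  have Heq: "H1 i j = H2 i j" if i: "i < m" and j: "j < r" for i j
  proof -
    have e: "(\<lambda>i. i = j) \<in> bvecs r" using j by (simp add: bvecs_iff)
    then obtain h where h: "h \<in> bvecs r" "Pmul m r H1 piv1 (\<lambda>i. i = j) = Pmul m r H2 piv2 h" using C by blast
    have "h = (\<lambda>i. i = j)"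
    proof
      fix i show "h i = (i = j)"
      proof (cases "i < r")
        case True
        have "h i = Pmul m r H2 piv2 h (piv2 i)" using c2.Pmul_piv[OF True] by simp
        also have "\<dots> = Pmul m r H1 piv1 (\<lambda>i. i = j) (piv1 i)" using h(2) peq[OF True] by simp
        also have "\<dots> = (i = j)" using c1.Pmul_piv[OF True] by simp
        finally show ?thesis .
      next
        case False then show ?thesis using h(1) j by (auto simp: bvecs_iff)
      qed
    qed
    then show ?thesis using c1.Pmul_col[OF j, of i] c2.Pmul_col[OF j, of i] h(2) i by simp
  qed
  have npeq: "nonpiv m r piv1 = nonpiv m r piv2" unfolding nonpiv_def using pim by simp
  show ?thesis
  proof (rule ext, rule ext)
    fix u i
    show "Pmul m r H1 piv1 u i = Pmul m r H2 piv2 u i"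
    proof (cases "i < m")
      case True
      have "(\<Sum>j<r. (of_bool (H1 i j \<and> u j) :: nat)) = (\<Sum>j<r. of_bool (H2 i j \<and> u j))"
        by (rule sum.cong[OF refl]) (use Heq True in auto)
      then show ?thesis unfolding Pmul_def npeq by simp
    next
      case False then show ?thesis unfolding Pmul_def by simp
    qed
  qed
qed



lemma Bf_left_tail: "\<forall>i<r. \<not> t i \<Longrightarrow> Bf r S (xv h t) w = Bf r S h w"
  unfolding Bf_def by (rule sum.cong[OF refl], rule sum.cong[OF refl]) auto

lemma Bf_right_tail: "\<forall>i<r. \<not> t i \<Longrightarrow> Bf r S w t = 0"
  unfolding Bf_def by simp

lemma Qf_tail: "\<forall>i<r. \<not> t i \<Longrightarrow> Qf r S t = 0"
  unfolding Qf_def by simp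

lemma tlo_low: "\<forall>i<r. \<not> tlo r b i" unfolding tlo_def by simp

lemma Ef_tail: "is_symr r S \<Longrightarrow> Ef m r S b (xv h (tlo r b')) = Ef m r S b h * Ef m r S b (tlo r b')"
  using Ef_xv[of r S m b h "tlo r b'"] Bf_right_tail[OF tlo_low] by simp

lemma Ef_tl_eq:
  assumes tl: "\<forall>i\<in>{r..<m}. b1 i = b2 i"
  shows "Ef m r S1 b1 (tlo r b1) = Ef m r S2 b2 (tlo r b1)"
proof -
  have "Df m b1 (tlo r b1) = Df m b2 (tlo r b1)"
    unfolding Df_def by (rule sum.cong[OF refl]) (use tl in \<open>auto simp: tlo_def\<close>)
  then show ?thesis unfolding Ef_def using Qf_tail[OF tlo_low] by simp
qed

lemma cnj_m1: "cnj ((-1::complex) ^ n) = (-1) ^ n" by simp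

context cref begin

lemma sameP:
  assumes sy1: "is_symr r S1" and sy2: "is_symr r S2" and b1: "b1 \<in> bvecs m" and b2: "b2 \<in> bvecs m"
    and tl: "\<forall>i\<in>{r..<m}. b1 i = b2 i"
    and ne: "bssc m r H piv S1 b1 \<noteq> bssc m r H piv S2 b2"
  shows "cmod (cinner m (bssc m r H piv S1 b1) (bssc m r H piv S2 b2)) \<le> 1 / sqrt 2"
proof -
  define t where "t = tlo r b1"
  define U where "U = Uset m r b1"
  define E1 where "E1 = Ef m r S1 b1"
  define E2 where "E2 = Ef m r S2 b2"
  define g where "g = (\<lambda>h. cnj (E1 h) * E2 h)"
  define c where "c = 1 / sqrt ((2::real) ^ r)"
  have U2: "Uset m r b2 = U" unfolding U_def Uset_def using tl by auto
  have Et: "E1 t = E2 t" unfolding E1_def E2_def t_def by (rule Ef_tl_eq[OF tl])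
  have E1u: "\<And>h. E1 (xv h t) = E1 h * E1 t" unfolding E1_def t_def by (rule Ef_tail[OF sy1])
  have E2u: "\<And>h. E2 (xv h t) = E2 h * E2 t" unfolding E2_def t_def by (rule Ef_tail[OF sy2])
  have unit1: "\<And>h. cnj (E1 h) * E1 h = 1" unfolding E1_def using Ef_unit unit_cnj by blast
  have unit2: "\<And>h. cnj (E2 h) * E2 h = 1" unfolding E2_def using Ef_unit unit_cnj by blast
  have gt: "\<And>h. cnj (E1 (xv h t)) * E2 (xv h t) = g h"
  proof -
    fix h
    have "cnj (E1 (xv h t)) * E2 (xv h t) = (cnj (E1 h) * E2 h) * (cnj (E1 t) * E1 t)"
      using E1u E2u Et by simp
    then show "cnj (E1 (xv h t)) * E2 (xv h t) = g h" using unit1 unfolding g_def by simp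
  qed
  have "cinner m (bssc m r H piv S1 b1) (bssc m r H piv S2 b2)
      = (\<Sum>u\<in>bvecs m. cnj (bssc m r H piv S1 b1 (P u)) * bssc m r H piv S2 b2 (P u))"
    by (rule cinner_reindex[OF Pmul_bij])
  also have "\<dots> = (\<Sum>u\<in>bvecs m. if u \<in> U then of_real (c * c) * (cnj (E1 u) * E2 u) else 0)"
  proof (rule sum.cong[OF refl])
    fix u assume u: "u \<in> bvecs m"
    show "cnj (bssc m r H piv S1 b1 (P u)) * bssc m r H piv S2 b2 (P u) = (if u \<in> U then of_real (c * c) * (cnj (E1 u) * E2 u) else 0)"
    proof -
      have s2: "complex_of_real (sqrt (2 ^ r)) * complex_of_real (sqrt (2 ^ r)) = 2 ^ r"
        by (simp flip: of_real_mult)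
      show ?thesis unfolding bssc_Pmul[OF u] U2 using U_def E1_def E2_def c_def s2 by simp
    qed
  qed
  also have "\<dots> = of_real (c * c) * (\<Sum>u\<in>U. cnj (E1 u) * E2 u)"
  proof -
    have "bvecs m \<inter> U = U" unfolding U_def using U_sub by blast
    then show ?thesis by (simp add: sum.If_cases sum_distrib_left)
  qed
  also have "(\<Sum>u\<in>U. cnj (E1 u) * E2 u) = (\<Sum>h\<in>bvecs r. g h)"
    using sum.reindex_bij_betw[OF U_bij[OF rm b1], of "\<lambda>u. cnj (E1 u) * E2 u"] gt
    unfolding U_def t_def by simp
  finally have ip: "cinner m (bssc m r H piv S1 b1) (bssc m r H piv S2 b2) = of_real (c * c) * (\<Sum>h\<in>bvecs r. g h)" .
  define \<chi> where "\<chi> = (\<lambda>h w. ((-1::real) ^ Bf r S1 h w) * (-1) ^ Bf r S2 h w)"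
  have G: "(\<forall>h\<in>bvecs r. g h = 1) \<or> (cmod (\<Sum>h\<in>bvecs r. g h))^2 \<le> (2^r)^2/2"
  proof (rule gauss_bound[where \<chi> = \<chi>])
    show "\<forall>h\<in>bvecs r. cmod (g h) = 1" unfolding g_def E1_def E2_def by (simp add: norm_mult Ef_unit)
    show "\<forall>h\<in>bvecs r. \<forall>w\<in>bvecs r. g (xv h w) = g h * g w * complex_of_real (\<chi> h w)"
      unfolding g_def \<chi>_def E1_def E2_def Ef_xv[OF sy1] Ef_xv[OF sy2] by (simp add: mult_ac)
    show "\<forall>h\<in>bvecs r. \<forall>w\<in>bvecs r. \<chi> h w = 1 \<or> \<chi> h w = - 1"
      unfolding \<chi>_def by (auto simp: minus_one_power_iff)
    show "\<forall>h\<in>bvecs r. \<forall>w\<in>bvecs r. \<chi> h w = \<chi> w h"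
      unfolding \<chi>_def using Bf_sym[OF sy1] Bf_sym[OF sy2] by simp
    show "\<forall>h\<in>bvecs r. \<forall>h'\<in>bvecs r. \<forall>w\<in>bvecs r. \<chi> (xv h h') w = \<chi> h w * \<chi> h' w"
      unfolding \<chi>_def m1_lin by simp
  qed
  have "\<not> (\<forall>h\<in>bvecs r. g h = 1)"
  proof
    assume all: "\<forall>h\<in>bvecs r. g h = 1"
    have "bssc m r H piv S1 b1 = bssc m r H piv S2 b2"
    proof
      fix a show "bssc m r H piv S1 b1 a = bssc m r H piv S2 b2 a"
      proof (cases "a \<in> bvecs m")
        case False then show ?thesis by (simp add: bssc_out)
      next
        case True
        then obtain u where u: "u \<in> bvecs m" "a = P u" using Pmul_bij by (metis bij_betw_imp_surj_on imageE)
        show ?thesis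
        proof (cases "u \<in> U")
          case False then show ?thesis unfolding u(2) bssc_Pmul[OF u(1)] U2 U_def by simp
        next
          case True
          define h where "h = xv u t"
          have "u \<in> (\<lambda>h. xv h t) ` bvecs r" using True bij_betw_imp_surj_on[OF U_bij[OF rm b1]]
            unfolding t_def U_def by simp
          then obtain h' where h': "h' \<in> bvecs r" "u = xv h' t" by auto
          have h: "h \<in> bvecs r" using h' unfolding h_def by simp
          have uh: "u = xv h t" unfolding h_def by simp
          have "E2 h = E1 h"
          proof -
            have "E1 h * g h = (cnj (E1 h) * E1 h) * E2 h" unfolding g_def by (simp only: mult_ac)
            then have "E1 h * g h = E2 h" using unit1[of h] by simp
            then show ?thesis using all h by simp
          qed
          then have "E1 u = E2 u" using uh E1u E2u Et by simp
          then show ?thesis unfolding u(2) bssc_Pmul[OF u(1)] E1_def E2_def by (simp add: U2[unfolded U_def])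
        qed
      qed
    qed
    then show False using ne by simp
  qed
  then have sq: "(cmod (\<Sum>h\<in>bvecs r. g h))^2 \<le> (2^r)^2/2" using G by blast
  have "cmod (\<Sum>h\<in>bvecs r. g h) \<le> 2 ^ r / sqrt 2"
  proof -
    have "cmod (\<Sum>h\<in>bvecs r. g h) = sqrt ((cmod (\<Sum>h\<in>bvecs r. g h))^2)" by simp
    also have "\<dots> \<le> sqrt ((2^r)^2/2)" using sq real_sqrt_le_mono by blast
    also have "\<dots> = 2 ^ r / sqrt 2" by (simp add: real_sqrt_divide)
    finally show ?thesis .
  qed
  moreover have cc: "c * c = 1 / 2 ^ r" unfolding c_def by (simp add: power_divide real_sqrt_mult_self flip: real_sqrt_mult)
  ultimately have "c * c * cmod (\<Sum>h\<in>bvecs r. g h) \<le> 1 / sqrt 2"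
  proof -
    assume X: "cmod (\<Sum>h\<in>bvecs r. g h) \<le> 2 ^ r / sqrt 2" and cc: "c * c = 1 / 2 ^ r"
    have "c * c * cmod (\<Sum>h\<in>bvecs r. g h) = cmod (\<Sum>h\<in>bvecs r. g h) / 2 ^ r" using cc by simp
    also have "\<dots> \<le> (2 ^ r / sqrt 2) / 2 ^ r" by (rule divide_right_mono[OF X]) simp
    also have "\<dots> = 1 / sqrt 2" by simp
    finally show ?thesis .
  qed
  moreover have "cmod (cinner m (bssc m r H piv S1 b1) (bssc m r H piv S2 b2)) = c * c * cmod (\<Sum>h\<in>bvecs r. g h)"
    unfolding ip by (simp add: norm_mult norm_divide norm_power cc)
  ultimately show ?thesis by simp
qed

end


lemma bssc_Pmul_eq:
  assumes "Pmul m r H1 piv1 = Pmul m r H2 piv2"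
  shows "bssc m r H1 piv1 S b = bssc m r H2 piv2 S b"
  unfolding bssc_def assms ..

lemma pair_bound:
  assumes r1: "r1 \<le> m" "is_cref m r1 H1 piv1" "is_symr r1 S1" "b1 \<in> bvecs m"
    and r2: "r2 \<le> m" "is_cref m r2 H2 piv2" "is_symr r2 S2" "b2 \<in> bvecs m"
    and ne: "bssc m r1 H1 piv1 S1 b1 \<noteq> bssc m r2 H2 piv2 S2 b2"
  shows "cmod (cinner m (bssc m r1 H1 piv1 S1 b1) (bssc m r2 H2 piv2 S2 b2)) \<le> 1 / sqrt 2"
proof -
  interpret c1: cref m r1 H1 piv1 using r1 by unfold_locales
  interpret c2: cref m r2 H2 piv2 using r2 by unfold_locales
  define A1 where "A1 = Pmul m r1 H1 piv1 ` Uset m r1 b1"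
  define A2 where "A2 = Pmul m r2 H2 piv2 ` Uset m r2 b2"
  show ?thesis
  proof (cases "A1 = A2")
    case False
    show ?thesis
    proof (rule caseA[where ?A1.0=A1 and ?A2.0=A2 and ?r1.0=r1 and ?r2.0=r2])
      show "A1 \<subseteq> bvecs m" "A2 \<subseteq> bvecs m" unfolding A1_def A2_def using c1.A_sub c2.A_sub by auto
      show "card A1 = 2 ^ r1" "card A2 = 2 ^ r2" unfolding A1_def A2_def using c1.card_A r1(4) c2.card_A r2(4) by auto
      show "A1 \<noteq> A2" by fact
      show "\<forall>a\<in>A1. \<forall>b\<in>A1. \<forall>c\<in>A1. xv (xv a b) c \<in> A1" unfolding A1_def using c1.A_aff by blast
      show "\<forall>a\<in>A2. \<forall>b\<in>A2. \<forall>c\<in>A2. xv (xv a b) c \<in> A2" unfolding A2_def using c2.A_aff by blast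
      show "\<forall>a. cmod (bssc m r1 H1 piv1 S1 b1 a) = (if a \<in> A1 then 1 / sqrt (2 ^ r1) else 0)"
        unfolding A1_def using c1.norm_bssc[OF r1(4)] by blast
      show "\<forall>a. cmod (bssc m r2 H2 piv2 S2 b2 a) = (if a \<in> A2 then 1 / sqrt (2 ^ r2) else 0)"
        unfolding A2_def using c2.norm_bssc[OF r2(4)] by blast
    qed
  next
    case True
    have "(2::nat) ^ r1 = 2 ^ r2" using c1.card_A[OF r1(4)] c2.card_A[OF r2(4)] True
      unfolding A1_def A2_def by simp
    then have req: "r1 = r2" by simp
    have t1: "tlo r1 b1 \<in> Uset m r1 b1"
      using bij_betwE[OF U_bij[OF r1(1) r1(4)]] zv_bvecs by (metis xv_zv(2))
    define x where "x = Pmul m r1 H1 piv1 (tlo r1 b1)"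
    have x1: "x \<in> A1" unfolding x_def A1_def using t1 by blast
    have x2: "x \<in> A2" using x1 True by simp
    have "Pmul m r1 H1 piv1 ` bvecs r1 = Pmul m r2 H2 piv2 ` bvecs r2"
      using c1.C_from_A[OF r1(4) x1[unfolded A1_def]] c2.C_from_A[OF r2(4) x2[unfolded A2_def]] True
      unfolding A1_def A2_def by simp
    then have Peq: "Pmul m r1 H1 piv1 = Pmul m r1 H2 piv2"
      using cref_unique[of m r1 H1 piv1 H2 piv2] c1.cref_axioms c2.cref_axioms req by simp
    have Ueq: "Uset m r1 b1 = Uset m r1 b2"
    proof -
      have "Pmul m r1 H1 piv1 ` Uset m r1 b1 = Pmul m r1 H1 piv1 ` Uset m r1 b2"
        using True Peq req unfolding A1_def A2_def by simp
      then show ?thesis using inj_on_image_eq_iff[OF c1.Pmul_inj U_sub U_sub] by blast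
    qed
    have tl: "\<forall>i\<in>{r1..<m}. b1 i = b2 i"
    proof
      fix i assume i: "i \<in> {r1..<m}"
      have "tlo r1 b1 \<in> Uset m r1 b2" using t1 Ueq by simp
      then show "b1 i = b2 i" using i unfolding Uset_def tlo_def by auto
    qed
    have w2: "bssc m r2 H2 piv2 S2 b2 = bssc m r1 H1 piv1 S2 b2"
      using bssc_Pmul_eq[OF Peq] req by simp
    show ?thesis unfolding w2
      by (rule c1.sameP[OF r1(3) _ r1(4) r2(4) tl]) (use r2(3) req ne w2 in auto)
  qed
qed



definition Vals :: "nat \<Rightarrow> complex set" where
  "Vals m = (\<lambda>(r,k,e). complex_of_real (1 / sqrt (2 ^ r)) * \<i> ^ k * (if e then 1 else 0)) ` ({..m} \<times> {..<4} \<times> (UNIV :: bool set))"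

lemma finite_Vals: "finite (Vals m)" unfolding Vals_def by simp

lemma bssc_vals:
  assumes "r \<le> m" "a \<in> bvecs m"
  shows "bssc m r H piv S b a \<in> Vals m"
proof -
  define u where "u = (THE u. u \<in> bvecs m \<and> Pmul m r H piv u = a)"
  define n :: nat where "n = (\<Sum>i<r. \<Sum>j<r. of_bool (S i j \<and> u i \<and> u j)) + 2 * (\<Sum>i<m. of_bool (b i \<and> u i))"
  define e where "e = (\<forall>i\<in>{r..<m}. b i = u i)"
  have "bssc m r H piv S b a = complex_of_real (1 / sqrt (2 ^ r)) * \<i> ^ n * (if e then 1 else 0)"
    unfolding bssc_def Let_def u_def[symmetric] n_def[symmetric] e_def using assms(2)
    by (simp add: prod_of_bool_c)
  also have "\<dots> = complex_of_real (1 / sqrt (2 ^ r)) * \<i> ^ (n mod 4) * (if e then 1 else 0)"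
    using i_pow_mod[of n] by simp
  also have "\<dots> \<in> Vals m" unfolding Vals_def
    by (rule image_eqI[where x="(r, n mod 4, e)"]) (use assms(1) in auto)
  finally show ?thesis .
qed

lemma finite_V_BSSC: "finite (V_BSSC m)"
proof (rule finite_subset)
  show "V_BSSC m \<subseteq> {f. \<forall>x. (x \<in> bvecs m \<longrightarrow> f x \<in> Vals m) \<and> (x \<notin> bvecs m \<longrightarrow> f x = 0)}"
  proof
    fix f assume "f \<in> V_BSSC m"
    then obtain r H piv S b where "r \<le> m" "f = bssc m r H piv S b" unfolding V_BSSC_def by blast
    then show "f \<in> {f. \<forall>x. (x \<in> bvecs m \<longrightarrow> f x \<in> Vals m) \<and> (x \<notin> bvecs m \<longrightarrow> f x = 0)}"
      using bssc_vals bssc_out by auto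
  qed
  show "finite {f. \<forall>x. (x \<in> bvecs m \<longrightarrow> f x \<in> Vals m) \<and> (x \<notin> bvecs m \<longrightarrow> f x = 0)}"
    by (rule finite_set_of_finite_funs) (auto simp: finite_Vals)
qed

lemma V_BC_sub: "V_BC m \<subseteq> V_BSSC m"
  unfolding V_BC_def V_BSSC_def by blast

lemma bound_BSSC:
  "\<forall>w1\<in>V_BSSC m. \<forall>w2\<in>V_BSSC m. w1 \<noteq> w2 \<longrightarrow> cmod (cinner m w1 w2) \<le> 1 / sqrt 2"
  unfolding V_BSSC_def using pair_bound by blast

lemma min_chordal_eq:
  assumes fin: "finite V"
    and bound: "\<forall>w1\<in>V. \<forall>w2\<in>V. w1 \<noteq> w2 \<longrightarrow> cmod (cinner m w1 w2) \<le> 1 / sqrt 2"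
    and ex: "\<exists>w1\<in>V. \<exists>w2\<in>V. w1 \<noteq> w2 \<and> cmod (cinner m w1 w2) = 1 / sqrt 2"
  shows "min_chordal m V = 1 / sqrt 2"
  unfolding min_chordal_def
proof (rule Min_eqI)
  let ?X = "{sqrt (1 - (cmod (cinner m w1 w2))\<^sup>2) |w1 w2. w1 \<in> V \<and> w2 \<in> V \<and> w1 \<noteq> w2}"
  have "?X \<subseteq> (\<lambda>(w1, w2). sqrt (1 - (cmod (cinner m w1 w2))\<^sup>2)) ` (V \<times> V)" by auto
  then show "finite ?X" using fin by (meson finite_SigmaI finite_imageI finite_subset)
  have half: "sqrt (1 / 2) = 1 / sqrt 2" by (simp add: real_sqrt_divide)
  show "y \<ge> 1 / sqrt 2" if yX: "y \<in> ?X" for y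
  proof -
    obtain w1 w2 where w: "w1 \<in> V" "w2 \<in> V" "w1 \<noteq> w2" "y = sqrt (1 - (cmod (cinner m w1 w2))\<^sup>2)"
      using yX by blast
    define c where "c = cmod (cinner m w1 w2)"
    have "c \<le> 1 / sqrt 2" "c \<ge> 0" using bound w unfolding c_def by auto
    then have "c^2 \<le> (1 / sqrt 2)^2" by (intro power_mono) auto
    then have "c^2 \<le> 1/2" by (simp add: power_divide)
    then have "sqrt (1/2) \<le> sqrt (1 - c^2)" by (intro real_sqrt_le_mono) simp
    then show ?thesis using w(4) half unfolding c_def by simp
  qed
  obtain w1 w2 where w: "w1 \<in> V" "w2 \<in> V" "w1 \<noteq> w2" "cmod (cinner m w1 w2) = 1 / sqrt 2" using ex by blast
  have "sqrt (1 - (cmod (cinner m w1 w2))\<^sup>2) = 1 / sqrt 2"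
    using w(4) half by (simp add: power_divide)
  then show "1 / sqrt 2 \<in> ?X" using w by force
qed



lemma cref_id: "is_cref m m (\<lambda>i j. i = j \<and> i < m) id"
  unfolding is_cref_def by auto

lemma witness:
  assumes m: "m \<ge> 1"
  shows "\<exists>w1\<in>V_BC m. \<exists>w2\<in>V_BC m. w1 \<noteq> w2 \<and> cmod (cinner m w1 w2) = 1 / sqrt 2"
proof -
  define Hid where "Hid = (\<lambda>i j. i = j \<and> i < m)"
  interpret cref m m Hid id unfolding Hid_def using cref_id by unfold_locales auto
  define S1 :: "nat \<Rightarrow> nat \<Rightarrow> bool" where "S1 = (\<lambda>i j. False)"
  define S2 :: "nat \<Rightarrow> nat \<Rightarrow> bool" where "S2 = (\<lambda>i j. i = 0 \<and> j = 0)"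
  define w1 where "w1 = bssc m m Hid id S1 zv"
  define w2 where "w2 = bssc m m Hid id S2 zv"
  define c where "c = 1 / sqrt ((2::real) ^ m)"
  have Pid: "P u = u" if u: "u \<in> bvecs m" for u
  proof
    fix i
    show "P u i = u i"
    proof (cases "i < m")
      case True
      have "(\<Sum>j<m. (of_bool (Hid i j \<and> u j) :: nat)) = (\<Sum>j<m. of_bool (u j \<and> j = i))"
        by (rule sum.cong[OF refl]) (auto simp: Hid_def True)
      also have "\<dots> = of_bool (u i)" by (rule sum_delta_nat[OF True])
      finally show ?thesis using Pmul_head[OF u, of i] True by simp
    next
      case False then show ?thesis using u Pmul_bvecs[of u] by (auto simp: bvecs_iff)
    qed
  qed
  have Uall: "Uset m m zv = bvecs m" unfolding Uset_def by auto
  have E1: "Ef m m S1 zv u = 1" for u unfolding Ef_def Qf_def Df_def S1_def by simp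
  have E2: "Ef m m S2 zv u = (if u 0 then \<i> else 1)" for u
  proof -
    have "Qf m S2 u = (\<Sum>i<m. if i = 0 then of_bool (u 0) else 0)"
      unfolding Qf_def S2_def
    proof (rule sum.cong[OF refl])
      fix i assume "i \<in> {..<m}"
      show "(\<Sum>j<m. (of_bool ((i = 0 \<and> j = 0) \<and> u i \<and> u j) :: nat)) = (if i = 0 then of_bool (u 0) else 0)"
      proof (cases "i = 0")
        case True
        have "(\<Sum>j<m. (of_bool ((i = 0 \<and> j = 0) \<and> u i \<and> u j) :: nat)) = (\<Sum>j<m. of_bool (u j \<and> j = 0))"
        proof (rule sum.cong[OF refl])
          fix j
          have "((i = 0 \<and> j = 0) \<and> u i \<and> u j) = (u j \<and> j = 0)" using True by blast
          then show "(of_bool ((i = 0 \<and> j = 0) \<and> u i \<and> u j) :: nat) = of_bool (u j \<and> j = 0)" by simp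
        qed
        also have "\<dots> = of_bool (u 0)" using sum_delta_nat[of 0 m u] m by simp
        finally show ?thesis using True by simp
      qed simp
    qed
    also have "\<dots> = of_bool (u 0)" using m by (subst sum.delta) auto
    finally show ?thesis unfolding Ef_def Df_def by simp
  qed
  have v1: "w1 u = complex_of_real c" if "u \<in> bvecs m" for u
    using bssc_Pmul[OF that, of S1 zv] Pid[OF that] that unfolding w1_def Uall E1 c_def by simp
  have v2: "w2 u = complex_of_real c * (if u 0 then \<i> else 1)" if "u \<in> bvecs m" for u
    using bssc_Pmul[OF that, of S2 zv] Pid[OF that] that unfolding w2_def Uall E2 c_def by simp
  define B0 where "B0 = {u \<in> bvecs m. \<not> u 0}"
  define B1 where "B1 = {u \<in> bvecs m. u 0}"
  define e0 where "e0 = (\<lambda>i::nat. i = 0)"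
  have e0: "e0 \<in> bvecs m" unfolding e0_def using m by (simp add: bvecs_iff)
  have fB: "finite B0" "finite B1" unfolding B0_def B1_def by auto
  have "bij_betw (\<lambda>u. xv u e0) B0 B1"
    by (rule bij_betw_byWitness[where f'="\<lambda>u. xv u e0"]) (use e0 in \<open>auto simp: B0_def B1_def e0_def\<close>)
  then have cB: "card B1 = card B0" by (simp add: bij_betw_same_card)
  have "B0 \<union> B1 = bvecs m" "B0 \<inter> B1 = {}" unfolding B0_def B1_def by auto
  then have "card B0 + card B1 = 2 ^ m" using card_Un_disjoint[OF fB] card_bvecs by metis
  then have N: "2 * real (card B0) = 2 ^ m" using cB by (metis mult_2 of_nat_add of_nat_numeral of_nat_power)
  have "cinner m w1 w2 = (\<Sum>u\<in>bvecs m. complex_of_real (c * c) * (if u 0 then \<i> else 1))"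
    unfolding cinner_def by (rule sum.cong[OF refl]) (simp add: v1 v2)
  also have "\<dots> = complex_of_real (c * c) * (of_nat (card B1) * \<i> + of_nat (card B0))"
  proof -
    have "(\<Sum>u\<in>bvecs m. (if u 0 then \<i> else 1)) = of_nat (card B1) * \<i> + of_nat (card B0)"
    proof -
      have "bvecs m \<inter> {u. u 0} = B1" "bvecs m \<inter> - {u. u 0} = B0" unfolding B0_def B1_def by auto
      then show ?thesis by (simp add: sum.If_cases)
    qed
    then show ?thesis by (simp add: sum_distrib_left[symmetric])
  qed
  also have "\<dots> = complex_of_real (c * c * card B0) * (1 + \<i>)" using cB by (simp add: algebra_simps)
  finally have ip: "cinner m w1 w2 = complex_of_real (c * c * card B0) * (1 + \<i>)" .
  have cc: "c * c = 1 / 2 ^ m" unfolding c_def by (simp add: power_divide real_sqrt_mult_self flip: real_sqrt_mult)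
  have n1i: "cmod (1 + \<i>) = sqrt 2" by (simp add: cmod_def)
  have c0: "c \<ge> 0" unfolding c_def by simp
  have "cmod (cinner m w1 w2) = c * c * card B0 * sqrt 2" unfolding ip norm_mult norm_of_real n1i
    using c0 by (simp add: abs_mult)
  also have "\<dots> = sqrt 2 / 2" unfolding cc using N by (simp add: field_simps)
  also have "\<dots> = 1 / sqrt 2" by (simp add: field_simps)
  finally have val: "cmod (cinner m w1 w2) = 1 / sqrt 2" .
  have ne: "w1 \<noteq> w2"
  proof
    assume "w1 = w2"
    then have "w1 e0 = w2 e0" by simp
    then have "complex_of_real c = complex_of_real c * \<i>" using v1[OF e0] v2[OF e0] by (simp add: e0_def)
    moreover have "c \<noteq> 0" unfolding c_def by simp
    ultimately show False by simp
  qed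
  have inV: "bssc m m Hid id S zv \<in> V_BC m" if "is_symr m S" for S
    unfolding V_BC_def using cref_id that unfolding Hid_def by force
  have "w1 \<in> V_BC m" unfolding w1_def by (rule inV) (simp add: is_symr_def S1_def)
  moreover have "w2 \<in> V_BC m" unfolding w2_def by (rule inV) (auto simp: is_symr_def S2_def)
  ultimately show ?thesis using ne val by blast
qed



theorem proposition1:
  fixes m :: nat
  assumes "m \<ge> 1"
  shows "(\<forall>w1\<in>V_BSSC m. \<forall>w2\<in>V_BSSC m. w1 \<noteq> w2 \<longrightarrow> cmod (cinner m w1 w2) \<le> 1 / sqrt 2)
       \<and> (\<exists>w1\<in>V_BSSC m. \<exists>w2\<in>V_BSSC m. w1 \<noteq> w2 \<and> cmod (cinner m w1 w2) = 1 / sqrt 2)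
       \<and> min_chordal m (V_BSSC m) = 1 / sqrt 2
       \<and> min_chordal m (V_BC m) = 1 / sqrt 2"
proof -
  have b: "\<forall>w1\<in>V_BSSC m. \<forall>w2\<in>V_BSSC m. w1 \<noteq> w2 \<longrightarrow> cmod (cinner m w1 w2) \<le> 1 / sqrt 2"
    by (rule bound_BSSC)
  have w: "\<exists>w1\<in>V_BC m. \<exists>w2\<in>V_BC m. w1 \<noteq> w2 \<and> cmod (cinner m w1 w2) = 1 / sqrt 2"
    by (rule witness[OF assms])
  have w': "\<exists>w1\<in>V_BSSC m. \<exists>w2\<in>V_BSSC m. w1 \<noteq> w2 \<and> cmod (cinner m w1 w2) = 1 / sqrt 2"
    using w V_BC_sub by blast
  have bC: "\<forall>w1\<in>V_BC m. \<forall>w2\<in>V_BC m. w1 \<noteq> w2 \<longrightarrow> cmod (cinner m w1 w2) \<le> 1 / sqrt 2"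
    using b V_BC_sub by blast
  have fC: "finite (V_BC m)" using finite_V_BSSC V_BC_sub finite_subset by blast
  show ?thesis
    using b w' min_chordal_eq[OF finite_V_BSSC b w'] min_chordal_eq[OF fC bC w] by blast
qed

end
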